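(* The DODOSP restricted to instances with $r_l^d=0$ and $r_u^d=N$ for each day $d$ can be decided in time polynomial in $D$.
   Context: An instance of the Days On Days Off Scheduling Problem (DODOSP) consists of integers $D\ge 1$ (days), $N\ge 1$ (workers), bounds $l_w,u_w,l_o,u_o,U_w,U_o\in\mathbb{N}$, and for each day $d\in\{1,\dots,D\}$ integers $0\le r_l^d\le r_u^d\le N$. A schedule is a map $f:\{n_1,\dots,n_N\}\times\{1,\dots,D\}\to\{\mathrm{ON},\mathrm{OFF}\}$ (not cyclic). A work period (resp. off period) of a worker is an inclusion-wise maximal set of consecutive days on which the worker is ON (resp. OFF). A schedule is feasible if on every day $d$ the number of workers that are ON lies in $[r_l^d,r_u^d]$, every work period has length between $l_w$ and $u_w$, every off period has length between $l_o$ and $u_o$, every worker is ON on at most $U_w$ days and OFF on at most $U_o$ days. The decision problem asks whether a feasible schedule exists. *)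

theory Defs
  imports Main
begin

text \<open>Workers are indexed by 0..N-1, days by 1..D. A schedule is
  f :: nat => nat => bool, where f i d = True means worker i is ON on day d.\<close>

definition consec_days :: "nat \<Rightarrow> nat set \<Rightarrow> bool" where
  "consec_days D S \<longleftrightarrow> (\<exists>a b. 1 \<le> a \<and> a \<le> b \<and> b \<le> D \<and> S = {a..b})"

definition period :: "nat \<Rightarrow> (nat \<Rightarrow> bool) \<Rightarrow> nat set \<Rightarrow> bool" where
  "period D p S \<longleftrightarrow> consec_days D S \<and> (\<forall>d\<in>S. p d) \<and>
     (\<forall>T. consec_days D T \<and> S \<subseteq> T \<and> (\<forall>d\<in>T. p d) \<longrightarrow> T = S)"

definition work_period :: "nat \<Rightarrow> (nat \<Rightarrow> nat \<Rightarrow> bool) \<Rightarrow> nat \<Rightarrow> nat set \<Rightarrow> bool" where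
  "work_period D f i S \<longleftrightarrow> period D (\<lambda>d. f i d) S"

definition off_period :: "nat \<Rightarrow> (nat \<Rightarrow> nat \<Rightarrow> bool) \<Rightarrow> nat \<Rightarrow> nat set \<Rightarrow> bool" where
  "off_period D f i S \<longleftrightarrow> period D (\<lambda>d. \<not> f i d) S"

definition feasible_schedule ::
  "nat \<Rightarrow> nat \<Rightarrow> nat \<Rightarrow> nat \<Rightarrow> nat \<Rightarrow> nat \<Rightarrow> nat \<Rightarrow> nat \<Rightarrow>
   (nat \<Rightarrow> nat) \<Rightarrow> (nat \<Rightarrow> nat) \<Rightarrow> (nat \<Rightarrow> nat \<Rightarrow> bool) \<Rightarrow> bool" where
  "feasible_schedule D N lw uw lo uo Uw Uo rl ru f \<longleftrightarrow>
     (\<forall>d\<in>{1..D}. rl d \<le> card {i. i < N \<and> f i d} \<and> card {i. i < N \<and> f i d} \<le> ru d) \<and>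
     (\<forall>i<N. \<forall>S. work_period D f i S \<longrightarrow> lw \<le> card S \<and> card S \<le> uw) \<and>
     (\<forall>i<N. \<forall>S. off_period D f i S \<longrightarrow> lo \<le> card S \<and> card S \<le> uo) \<and>
     (\<forall>i<N. card {d\<in>{1..D}. f i d} \<le> Uw) \<and>
     (\<forall>i<N. card {d\<in>{1..D}. \<not> f i d} \<le> Uo)"

definition dodosp_yes ::
  "nat \<Rightarrow> nat \<Rightarrow> nat \<Rightarrow> nat \<Rightarrow> nat \<Rightarrow> nat \<Rightarrow> nat \<Rightarrow> nat \<Rightarrow>
   (nat \<Rightarrow> nat) \<Rightarrow> (nat \<Rightarrow> nat) \<Rightarrow> bool" where
  "dodosp_yes D N lw uw lo uo Uw Uo rl ru \<longleftrightarrow>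
     (\<exists>f. feasible_schedule D N lw uw lo uo Uw Uo rl ru f)"

type_synonym state = "nat \<Rightarrow> nat"

datatype aexp = Const nat | Mem aexp | Plus aexp aexp | Minus aexp aexp
datatype bexp = Less aexp aexp | Not bexp | And bexp bexp
datatype com = Skip | Store aexp aexp | Seq com com | If bexp com com | While bexp com

fun aval :: "aexp \<Rightarrow> state \<Rightarrow> nat" where
  "aval (Const n) s = n"
| "aval (Mem a) s = s (aval a s)"
| "aval (Plus a b) s = aval a s + aval b s"
| "aval (Minus a b) s = aval a s - aval b s"

fun bval :: "bexp \<Rightarrow> state \<Rightarrow> bool" where
  "bval (Less a b) s = (aval a s < aval b s)"
| "bval (Not b) s = (\<not> bval b s)"
| "bval (And b c) s = (bval b s \<and> bval c s)"

inductive big_step :: "com \<Rightarrow> state \<Rightarrow> nat \<Rightarrow> state \<Rightarrow> bool" where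
  Skip: "big_step Skip s 1 s"
| Store: "big_step (Store a b) s 1 (s(aval a s := aval b s))"
| Seq: "big_step c1 s t1 s2 \<Longrightarrow> big_step c2 s2 t2 s3 \<Longrightarrow> big_step (Seq c1 c2) s (t1 + t2) s3"
| IfT: "bval b s \<Longrightarrow> big_step c1 s t s' \<Longrightarrow> big_step (If b c1 c2) s (Suc t) s'"
| IfF: "\<not> bval b s \<Longrightarrow> big_step c2 s t s' \<Longrightarrow> big_step (If b c1 c2) s (Suc t) s'"
| WhileF: "\<not> bval b s \<Longrightarrow> big_step (While b c) s 1 s"
| WhileT: "bval b s \<Longrightarrow> big_step c s t1 s2 \<Longrightarrow> big_step (While b c) s2 t2 s3 \<Longrightarrow>
           big_step (While b c) s (Suc (t1 + t2)) s3"

definition input_state ::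
  "nat \<Rightarrow> nat \<Rightarrow> nat \<Rightarrow> nat \<Rightarrow> nat \<Rightarrow> nat \<Rightarrow> nat \<Rightarrow> nat \<Rightarrow>
   (nat \<Rightarrow> nat) \<Rightarrow> (nat \<Rightarrow> nat) \<Rightarrow> state" where
  "input_state D N lw uw lo uo Uw Uo rl ru = (\<lambda>a.
     if a < 8 then [D, N, lw, uw, lo, uo, Uw, Uo] ! a
     else if a < 8 + 2 * D then
       (if even (a - 8) then rl ((a - 8) div 2 + 1) else ru ((a - 8) div 2 + 1))
     else 0)"

end

theory Submission
  imports Defs
begin


definition run :: "nat \<Rightarrow> nat \<Rightarrow> (nat \<Rightarrow> bool) \<Rightarrow> bool \<Rightarrow> nat \<Rightarrow> nat \<Rightarrow> bool" where
  "run a D p v c e \<longleftrightarrow> a \<le> c \<and> c \<le> e \<and> e \<le> D \<and> (\<forall>d\<in>{c..e}. p d = v) \<and>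
     (c = a \<or> p (c - 1) \<noteq> v) \<and> (e = D \<or> p (Suc e) \<noteq> v)"

definition okr :: "nat \<Rightarrow> nat \<Rightarrow> (nat \<Rightarrow> bool) \<Rightarrow> (bool \<Rightarrow> nat) \<Rightarrow> (bool \<Rightarrow> nat) \<Rightarrow> bool" where
  "okr a D p lb ub \<longleftrightarrow> (\<forall>v c e. run a D p v c e \<longrightarrow> lb v \<le> Suc e - c \<and> Suc e - c \<le> ub v)"

definition cnt :: "nat \<Rightarrow> nat \<Rightarrow> (nat \<Rightarrow> bool) \<Rightarrow> bool \<Rightarrow> nat" where
  "cnt a D p v = card {d\<in>{a..D}. p d = v}"

lemma cnt_sum: "cnt a D p v + cnt a D p (\<not> v) = Suc D - a"
proof -
  have e: "{a..D} = {d\<in>{a..D}. p d = v} \<union> {d\<in>{a..D}. p d = (\<not> v)}" by auto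
  have "card {a..D} = card {d\<in>{a..D}. p d = v} + card {d\<in>{a..D}. p d = (\<not> v)}"
    by (subst e, rule card_Un_disjoint) auto
  then show ?thesis unfolding cnt_def by simp
qed

lemma cnt_split: "a \<le> Suc b \<Longrightarrow> b \<le> D \<Longrightarrow>
   cnt a D p v = card {d\<in>{a..b}. p d = v} + cnt (Suc b) D p v"
proof -
  assume h: "a \<le> Suc b" "b \<le> D"
  have e: "{d\<in>{a..D}. p d = v} = {d\<in>{a..b}. p d = v} \<union> {d\<in>{Suc b..D}. p d = v}" using h by auto
  have "card {d\<in>{a..D}. p d = v} = card {d\<in>{a..b}. p d = v} + card {d\<in>{Suc b..D}. p d = v}"
    by (subst e, rule card_Un_disjoint) auto
  then show ?thesis unfolding cnt_def .
qed

lemma card_const: "\<forall>d\<in>{a..b}. p d = v \<Longrightarrow> card {d\<in>{a..b}. p d = v} = Suc b - a"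
proof -
  assume "\<forall>d\<in>{a..b}. p d = v"
  then have e: "{d\<in>{a..b}. p d = v} = {a..b}" by blast
  show ?thesis by (simp only: e card_atLeastAtMost)
qed

lemma card_const2: "\<forall>d\<in>{a..b}. p d = v \<Longrightarrow> card {d\<in>{a..b}. p d = (\<not> v)} = 0"
proof -
  assume "\<forall>d\<in>{a..b}. p d = v"
  then have "{d\<in>{a..b}. p d = (\<not> v)} = {}" by blast
  then show ?thesis by (metis card.empty)
qed

lemma run_mono:
  assumes r: "run (Suc b) D p w c e" and ab: "a \<le> b" and pb: "p (Suc b) \<noteq> p b"
  shows "run a D p w c e"
proof -
  have r1: "Suc b \<le> c" "c \<le> e" "e \<le> D" "\<forall>d\<in>{c..e}. p d = w"
    "c = Suc b \<or> p (c - 1) \<noteq> w" "e = D \<or> p (Suc e) \<noteq> w" using r unfolding run_def by blast+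
  have pc: "p c = w" using r1(2,4) by simp
  have "c = a \<or> p (c - 1) \<noteq> w"
  proof (cases "c = Suc b")
    case True
    then show ?thesis using pc pb by simp
  next
    case False
    then show ?thesis using r1(5) by blast
  qed
  then show ?thesis unfolding run_def using r1 ab by simp
qed

lemma block_end:
  assumes "a \<le> D" "p a = v"
  shows "\<exists>b. a \<le> b \<and> b \<le> D \<and> (\<forall>d\<in>{a..b}. p d = v) \<and> (b = D \<or> p (Suc b) \<noteq> v)"
proof -
  define B where "B = {e. a \<le> e \<and> e \<le> D \<and> (\<forall>d\<in>{a..e}. p d = v)}"
  have fin: "finite B" unfolding B_def by (rule finite_subset[of _ "{..D}"]) auto
  have aB: "a \<in> B" unfolding B_def using assms by auto
  define b where "b = Max B"
  have ne: "B \<noteq> {}" using aB by blast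
  have bB: "b \<in> B" unfolding b_def by (rule Max_in[OF fin ne])
  have "b = D \<or> p (Suc b) \<noteq> v"
  proof (rule ccontr)
    assume "\<not> ?thesis"
    then have h: "Suc b \<le> D" "p (Suc b) = v" using bB unfolding B_def by auto
    have "\<forall>d\<in>{a..Suc b}. p d = v"
    proof
      fix d assume d: "d \<in> {a..Suc b}"
      then have "d \<in> {a..b} \<or> d = Suc b" by auto
      then show "p d = v" using bB h unfolding B_def by blast
    qed
    then have "Suc b \<in> B" using bB h unfolding B_def by auto
    then have "Suc b \<le> b" unfolding b_def by (rule Max_ge[OF fin])
    then show False by simp
  qed
  then show ?thesis using bB unfolding B_def by auto
qed

lemma fwd:
  "a \<le> D \<Longrightarrow> okr a D p lb ub \<Longrightarrow> p a = v \<Longrightarrow> \<exists>k1 k2. 1 \<le> k1 \<and> (k2 = k1 - 1 \<or> k2 = k1) \<and>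
     k1 * max (lb v) 1 \<le> cnt a D p v \<and> cnt a D p v \<le> k1 * ub v \<and>
     k2 * max (lb (\<not> v)) 1 \<le> cnt a D p (\<not> v) \<and> cnt a D p (\<not> v) \<le> k2 * ub (\<not> v)"
proof (induction "D - a" arbitrary: a v rule: less_induct)
  case less
  obtain b where b: "a \<le> b" "b \<le> D" "\<forall>d\<in>{a..b}. p d = v" "b = D \<or> p (Suc b) \<noteq> v"
    using block_end[of a D p v] less.prems(1,3) by blast
  have r: "run a D p v a b" unfolding run_def using b by auto
  then have L: "lb v \<le> Suc b - a" "Suc b - a \<le> ub v" using less.prems(2) unfolding okr_def by blast+
  have c1: "card {d\<in>{a..b}. p d = v} = Suc b - a" using card_const[OF b(3)] .
  have c2: "card {d\<in>{a..b}. p d = (\<not> v)} = 0" using card_const2[OF b(3)] .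
  show ?case
  proof (cases "b = D")
    case True
    have e1: "cnt a D p v = Suc D - a"
      using cnt_split[of a b D p v] c1 b True by (simp add: cnt_def)
    have e2: "cnt a D p (\<not> v) = 0"
      using cnt_split[of a b D p "\<not> v"] c2 b True by (simp add: cnt_def)
    show ?thesis
      by (rule exI[of _ 1], rule exI[of _ 0]) (use e1 e2 L True b in auto)
  next
    case False
    then have bD: "b < D" "p (Suc b) = (\<not> v)" using b by auto
    have pb: "p b = v" using b by auto
    have ok2: "okr (Suc b) D p lb ub"
      unfolding okr_def
    proof (intro allI impI)
      fix w c e assume "run (Suc b) D p w c e"
      then have "run a D p w c e" using run_mono[of b D p w c e a] b bD pb by auto
      then show "lb w \<le> Suc e - c \<and> Suc e - c \<le> ub w" using less.prems(2) unfolding okr_def by blast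
    qed
    have lt: "D - Suc b < D - a" using b bD by arith
    have IH: "\<exists>k1 k2. 1 \<le> k1 \<and> (k2 = k1 - 1 \<or> k2 = k1) \<and>
      k1 * max (lb (\<not> v)) 1 \<le> cnt (Suc b) D p (\<not> v) \<and>
      cnt (Suc b) D p (\<not> v) \<le> k1 * ub (\<not> v) \<and>
      k2 * max (lb (\<not> \<not> v)) 1 \<le> cnt (Suc b) D p (\<not> \<not> v) \<and>
      cnt (Suc b) D p (\<not> \<not> v) \<le> k2 * ub (\<not> \<not> v)"
      by (rule less.hyps[OF lt]) (use bD ok2 in auto)
    obtain k1 k2 where k: "1 \<le> k1" "k2 = k1 - 1 \<or> k2 = k1"
      "k1 * max (lb (\<not> v)) 1 \<le> cnt (Suc b) D p (\<not> v)"
      "cnt (Suc b) D p (\<not> v) \<le> k1 * ub (\<not> v)"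
      "k2 * max (lb v) 1 \<le> cnt (Suc b) D p v"
      "cnt (Suc b) D p v \<le> k2 * ub v"
      using IH by auto
    have e1: "cnt a D p v = (Suc b - a) + cnt (Suc b) D p v"
      using cnt_split[of a b D p v] c1 b by simp
    have e2: "cnt a D p (\<not> v) = cnt (Suc b) D p (\<not> v)"
      using cnt_split[of a b D p "\<not> v"] c2 b by simp
    have m1: "max (lb v) 1 \<le> Suc b - a" using L b by (simp del: max_def)
    show ?thesis
    proof (rule exI[of _ "Suc k2"], rule exI[of _ k1], intro conjI)
      show "Suc k2 * max (lb v) 1 \<le> cnt a D p v"
        using k(5) m1 e1 mult_Suc[of k2 "max (lb v) 1"] by linarith
      show "cnt a D p v \<le> Suc k2 * ub v"
        using k(6) L e1 mult_Suc[of k2 "ub v"] by linarith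
      show "k1 * max (lb (\<not> v)) 1 \<le> cnt a D p (\<not> v)"
        using k(3) e2 by simp
      show "cnt a D p (\<not> v) \<le> k1 * ub (\<not> v)"
        using k(4) e2 by simp
      show "1 \<le> Suc k2" by simp
      show "k1 = Suc k2 - 1 \<or> k1 = Suc k2" using k(1,2) by arith
    qed
  qed
qed

lemma split_len:
  assumes "Suc K * l \<le> X" "X \<le> Suc K * u"
  shows "\<exists>L. l \<le> L \<and> L \<le> u \<and> L \<le> X \<and> K * l \<le> X - L \<and> X - L \<le> K * u"
proof -
  have "Suc K * l \<le> Suc K * u" using assms by linarith
  then have lu: "l \<le> u" by (simp only: Suc_mult_le_cancel1)
  have Kl: "K * l \<le> K * u" using lu by (rule mult_le_mono2)
  have e1: "Suc K * l = l + K * l" "Suc K * u = u + K * u" by simp_all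
  show ?thesis
    by (rule exI[of _ "min u (X - K * l)"]) (use assms e1 Kl lu in \<open>simp add: min_def, linarith\<close>)
qed

lemma cnt_cong: "\<forall>d\<in>{a..D}. p d = q d \<Longrightarrow> cnt a D p v = cnt a D q v"
proof -
  assume h: "\<forall>d\<in>{a..D}. p d = q d"
  have "{d\<in>{a..D}. p d = v} = {d\<in>{a..D}. q d = v}" using h by auto
  then show ?thesis unfolding cnt_def by (simp only:)
qed

lemma cons:
  "k1 + k2 = n \<Longrightarrow> 1 \<le> k1 \<Longrightarrow> (k2 = k1 - 1 \<or> k2 = k1) \<Longrightarrow> X + Y = Suc D - a \<Longrightarrow>
   k1 * max (lb v) 1 \<le> X \<Longrightarrow> X \<le> k1 * ub v \<Longrightarrow>
   k2 * max (lb (\<not> v)) 1 \<le> Y \<Longrightarrow> Y \<le> k2 * ub (\<not> v) \<Longrightarrow>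
   \<exists>p. p a = v \<and> okr a D p lb ub \<and> cnt a D p v = X"
proof (induction n arbitrary: a v k1 k2 X Y)
  case 0
  then show ?case by simp
next
  case (Suc n)
  show ?case
  proof (cases "k2 = 0")
    case True
    then have k1: "k1 = 1" using Suc.prems(2,3) by arith
    have Y0: "Y = 0" using Suc.prems(8) True by simp
    have X: "X = Suc D - a" using Suc.prems(4) Y0 by simp
    have Xb: "lb v \<le> X" "X \<le> ub v" using Suc.prems(5,6) k1 by simp_all
    have ok: "okr a D (\<lambda>_. v) lb ub"
      unfolding okr_def
    proof (intro allI impI)
      fix w c e assume r: "run a D (\<lambda>_. v) w c e"
      then have ce: "c \<le> e" "e \<le> D" "\<forall>d\<in>{c..e}. v = w" "c = a \<or> v \<noteq> w" "e = D \<or> v \<noteq> w"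
        unfolding run_def by blast+
      have w: "w = v" using ce(1,3) by auto
      have "c = a" "e = D" using ce(4,5) w by auto
      then show "lb w \<le> Suc e - c \<and> Suc e - c \<le> ub w" using w X Xb by simp
    qed
    have e: "{d\<in>{a..D}. (\<lambda>_. v) d = v} = {a..D}" by blast
    have "cnt a D (\<lambda>_. v) v = X" unfolding cnt_def e using X by (simp only: card_atLeastAtMost)
    then show ?thesis using ok by (intro exI[of _ "\<lambda>_. v"]) simp
  next
    case False
    obtain K where K: "k1 = Suc K" using Suc.prems(2) by (cases k1) auto
    obtain L where L: "max (lb v) 1 \<le> L" "L \<le> ub v" "L \<le> X" "K * max (lb v) 1 \<le> X - L" "X - L \<le> K * ub v"
      using split_len[of K "max (lb v) 1" X "ub v"] Suc.prems(5,6) K by blast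
    have L1: "1 \<le> L" using L(1) by simp
    have aD: "a + L \<le> Suc D" using Suc.prems(4) L(3) L1 by arith
    have IH: "\<exists>q. q (a + L) = (\<not> v) \<and> okr (a + L) D q lb ub \<and> cnt (a + L) D q (\<not> v) = Y"
    proof (rule Suc.IH[of k2 K])
      show "k2 + K = n" using Suc.prems(1) K by simp
      show "1 \<le> k2" using False by simp
      show "K = k2 - 1 \<or> K = k2" using Suc.prems(3) K by arith
      show "Y + (X - L) = Suc D - (a + L)" using Suc.prems(4) L(3) by arith
      show "k2 * max (lb (\<not> v)) 1 \<le> Y" using Suc.prems(7) .
      show "Y \<le> k2 * ub (\<not> v)" using Suc.prems(8) .
      show "K * max (lb (\<not> \<not> v)) 1 \<le> X - L" using L(4) by simp
      show "X - L \<le> K * ub (\<not> \<not> v)" using L(5) by simp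
    qed
    then obtain q where q: "q (a + L) = (\<not> v)" "okr (a + L) D q lb ub" "cnt (a + L) D q (\<not> v) = Y"
      by blast
    define p where "p = (\<lambda>d. if d < a + L then v else q d)"
    have pa: "p a = v" unfolding p_def using L1 by simp
    define b where "b = a + L - 1"
    have sb: "Suc b = a + L" unfolding b_def using L1 by simp
    have bD: "b \<le> D" using aD sb by simp
    have pconst: "\<forall>d\<in>{a..b}. p d = v" unfolding p_def using sb by auto
    have c1: "card {d\<in>{a..b}. p d = v} = L" using card_const[OF pconst] sb by simp
    have c2: "cnt (a + L) D p v = cnt (a + L) D q v"
      by (rule cnt_cong) (simp add: p_def)
    have c3: "cnt (a + L) D q v = X - L"
      using cnt_sum[of "a + L" D q v] q(3) Suc.prems(4) L(3) by arith
    have cntp: "cnt a D p v = X"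
      using cnt_split[of a b D p v] sb bD c1 c2 c3 L(3) by simp
    have okp: "okr a D p lb ub"
      unfolding okr_def
    proof (intro allI impI)
      fix w c e assume r: "run a D p w c e"
      then have ce: "a \<le> c" "c \<le> e" "e \<le> D" "\<forall>d\<in>{c..e}. p d = w" "c = a \<or> p (c - 1) \<noteq> w"
        "e = D \<or> p (Suc e) \<noteq> w"
        unfolding run_def by blast+
      show "lb w \<le> Suc e - c \<and> Suc e - c \<le> ub w"
      proof (cases "c < a + L")
        case True
        have "p c = w" using ce(2,4) by simp
        then have w: "w = v" using True unfolding p_def by simp
        have ca: "c = a"
        proof (rule ccontr)
          assume "c \<noteq> a"
          then have "p (c - 1) \<noteq> w" using ce(5) by blast
          moreover have "c - 1 < a + L" using True by arith
          then have "p (c - 1) = v" unfolding p_def by simp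
          ultimately show False using w by simp
        qed
        have eL: "e < a + L"
        proof (rule ccontr)
          assume "\<not> e < a + L"
          then have "a + L \<in> {c..e}" using True by simp
          then have "p (a + L) = w" using ce(4) by blast
          moreover have "p (a + L) = (\<not> v)" unfolding p_def using q(1) by simp
          ultimately show False using w by simp
        qed
        have "e = b"
        proof (rule ccontr)
          assume "e \<noteq> b"
          then have "Suc e < a + L" using eL sb by simp
          then have "p (Suc e) = v" unfolding p_def by simp
          then have "e = D" using ce(6) w by simp
          then show False using \<open>Suc e < a + L\<close> aD by simp
        qed
        then have "Suc e - c = L" using ca sb by simp
        then show ?thesis using w L(1,2) by simp
      next
        case False
        have rq: "run (a + L) D q w c e"
          unfolding run_def
        proof (intro conjI)
          show "a + L \<le> c" "c \<le> e" "e \<le> D" using False ce by simp_all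
          show "\<forall>d\<in>{c..e}. q d = w" using ce(4) False unfolding p_def by auto
          show "c = a + L \<or> q (c - 1) \<noteq> w"
          proof (cases "c = a + L")
            case False2: False
            then have "c \<noteq> a" "a + L \<le> c - 1" using False L1 by auto
            then show ?thesis using ce(5) unfolding p_def by auto
          qed simp
          show "e = D \<or> q (Suc e) \<noteq> w"
            using ce(6) False ce(2) unfolding p_def by (auto split: if_splits)
        qed
        then show ?thesis using q(2) unfolding okr_def by blast
      qed
    qed
    show ?thesis using pa okp cntp by (intro exI[of _ p]) simp
  qed
qed

lemma period_run: "period D (\<lambda>d. p d = v) S \<longleftrightarrow> (\<exists>c e. S = {c..e} \<and> run 1 D p v c e)"
proof
  assume P: "period D (\<lambda>d. p d = v) S"
  then obtain c e where ce: "1 \<le> c" "c \<le> e" "e \<le> D" "S = {c..e}"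
    unfolding period_def consec_days_def by blast
  have all: "\<forall>d\<in>{c..e}. p d = v" using P ce(4) unfolding period_def by blast
  have mx: "\<And>T. consec_days D T \<Longrightarrow> S \<subseteq> T \<Longrightarrow> (\<forall>d\<in>T. p d = v) \<Longrightarrow> T = S"
    using P unfolding period_def by blast
  have left: "c = 1 \<or> p (c - 1) \<noteq> v"
  proof (rule ccontr)
    assume "\<not> ?thesis"
    then have h: "c \<noteq> 1" "p (c - 1) = v" by auto
    have "1 \<le> c - 1 \<and> c - 1 \<le> e \<and> e \<le> D \<and> {c - 1..e} = {c - 1..e}" using h ce by (simp, arith)
    then have "consec_days D {c - 1..e}" unfolding consec_days_def by blast
    moreover have "S \<subseteq> {c - 1..e}" using ce by auto
    moreover have "\<forall>d\<in>{c - 1..e}. p d = v"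
    proof
      fix d assume "d \<in> {c - 1..e}"
      then have "d = c - 1 \<or> d \<in> {c..e}" by auto
      then show "p d = v" using h all by blast
    qed
    ultimately have "{c - 1..e} = S" by (rule mx)
    then have "c - 1 \<in> S" using ce by simp
    then show False using ce h by (simp, arith)
  qed
  have right: "e = D \<or> p (Suc e) \<noteq> v"
  proof (rule ccontr)
    assume "\<not> ?thesis"
    then have h: "e \<noteq> D" "p (Suc e) = v" by auto
    have "1 \<le> c \<and> c \<le> Suc e \<and> Suc e \<le> D \<and> {c..Suc e} = {c..Suc e}" using h ce by simp
    then have "consec_days D {c..Suc e}" unfolding consec_days_def by blast
    moreover have "S \<subseteq> {c..Suc e}" using ce by auto
    moreover have "\<forall>d\<in>{c..Suc e}. p d = v"
    proof
      fix d assume "d \<in> {c..Suc e}"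
      then have "d = Suc e \<or> d \<in> {c..e}" by auto
      then show "p d = v" using h all by blast
    qed
    ultimately have "{c..Suc e} = S" by (rule mx)
    then have "Suc e \<in> S" using ce by simp
    then show False using ce h by simp
  qed
  show "\<exists>c e. S = {c..e} \<and> run 1 D p v c e"
    unfolding run_def using ce all left right by blast
next
  assume "\<exists>c e. S = {c..e} \<and> run 1 D p v c e"
  then obtain c e where S: "S = {c..e}" and r: "1 \<le> c" "c \<le> e" "e \<le> D" "\<forall>d\<in>{c..e}. p d = v"
    "c = 1 \<or> p (c - 1) \<noteq> v" "e = D \<or> p (Suc e) \<noteq> v"
    unfolding run_def by blast
  show "period D (\<lambda>d. p d = v) S"
    unfolding period_def
  proof (intro conjI allI impI)
    show "consec_days D S" unfolding consec_days_def S using r by blast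
    show "\<forall>d\<in>S. p d = v" using S r(4) by blast
    fix T assume T: "consec_days D T \<and> S \<subseteq> T \<and> (\<forall>d\<in>T. p d = v)"
    then obtain c' e' where T': "1 \<le> c'" "c' \<le> e'" "e' \<le> D" "T = {c'..e'}"
      unfolding consec_days_def by blast
    have sub: "c' \<le> c" "e \<le> e'" using T T' S r(2) by auto
    have tv: "\<forall>d\<in>{c'..e'}. p d = v" using T T' by blast
    have "c' = c"
    proof (rule ccontr)
      assume "c' \<noteq> c"
      then have "c' < c" using sub by simp
      then have "c \<noteq> 1" "c - 1 \<in> {c'..e'}" using T' sub r(2) by auto
      then show False using tv r(5) by blast
    qed
    moreover have "e' = e"
    proof (rule ccontr)
      assume "e' \<noteq> e"
      then have "e < e'" using sub by simp
      then have "e \<noteq> D" "Suc e \<in> {c'..e'}" using T' sub r(2) by auto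
      then show False using tv r(6) by blast
    qed
    ultimately show "T = S" using S T' by simp
  qed
qed

definition goodp :: "nat \<Rightarrow> nat \<Rightarrow> nat \<Rightarrow> nat \<Rightarrow> nat \<Rightarrow> nat \<Rightarrow> nat \<Rightarrow> (nat \<Rightarrow> bool) \<Rightarrow> bool" where
  "goodp D lw uw lo uo Uw Uo p \<longleftrightarrow>
     (\<forall>S. period D p S \<longrightarrow> lw \<le> card S \<and> card S \<le> uw) \<and>
     (\<forall>S. period D (\<lambda>d. \<not> p d) S \<longrightarrow> lo \<le> card S \<and> card S \<le> uo) \<and>
     card {d\<in>{1..D}. p d} \<le> Uw \<and> card {d\<in>{1..D}. \<not> p d} \<le> Uo"

lemma good_iff:
  "goodp D lw uw lo uo Uw Uo p \<longleftrightarrow>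
     okr 1 D p (\<lambda>v. if v then lw else lo) (\<lambda>v. if v then uw else uo) \<and>
     cnt 1 D p True \<le> Uw \<and> cnt 1 D p False \<le> Uo"
proof -
  have pT: "\<And>S. period D p S \<longleftrightarrow> (\<exists>c e. S = {c..e} \<and> run 1 D p True c e)"
    using period_run[of D p True] by simp
  have pF: "\<And>S. period D (\<lambda>d. \<not> p d) S \<longleftrightarrow> (\<exists>c e. S = {c..e} \<and> run 1 D p False c e)"
    using period_run[of D p False] by simp
  have A: "(\<forall>S. period D p S \<longrightarrow> lw \<le> card S \<and> card S \<le> uw) \<longleftrightarrow>
     (\<forall>c e. run 1 D p True c e \<longrightarrow> lw \<le> Suc e - c \<and> Suc e - c \<le> uw)"
  proof (intro iffI allI impI)
    fix c e assume h: "\<forall>S. period D p S \<longrightarrow> lw \<le> card S \<and> card S \<le> uw" "run 1 D p True c e"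
    then have "period D p {c..e}" using pT by blast
    then show "lw \<le> Suc e - c \<and> Suc e - c \<le> uw" using h(1) by fastforce
  next
    fix S assume h: "\<forall>c e. run 1 D p True c e \<longrightarrow> lw \<le> Suc e - c \<and> Suc e - c \<le> uw" "period D p S"
    then obtain c e where "S = {c..e}" "run 1 D p True c e" using pT by blast
    then show "lw \<le> card S \<and> card S \<le> uw" using h(1) by simp
  qed
  have B: "(\<forall>S. period D (\<lambda>d. \<not> p d) S \<longrightarrow> lo \<le> card S \<and> card S \<le> uo) \<longleftrightarrow>
     (\<forall>c e. run 1 D p False c e \<longrightarrow> lo \<le> Suc e - c \<and> Suc e - c \<le> uo)"
  proof (intro iffI allI impI)
    fix c e assume h: "\<forall>S. period D (\<lambda>d. \<not> p d) S \<longrightarrow> lo \<le> card S \<and> card S \<le> uo" "run 1 D p False c e"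
    then have "period D (\<lambda>d. \<not> p d) {c..e}" using pF by blast
    then show "lo \<le> Suc e - c \<and> Suc e - c \<le> uo" using h(1) by fastforce
  next
    fix S assume h: "\<forall>c e. run 1 D p False c e \<longrightarrow> lo \<le> Suc e - c \<and> Suc e - c \<le> uo" "period D (\<lambda>d. \<not> p d) S"
    then obtain c e where "S = {c..e}" "run 1 D p False c e" using pF by blast
    then show "lo \<le> card S \<and> card S \<le> uo" using h(1) by simp
  qed
  have C: "okr 1 D p (\<lambda>v. if v then lw else lo) (\<lambda>v. if v then uw else uo) \<longleftrightarrow>
     (\<forall>c e. run 1 D p True c e \<longrightarrow> lw \<le> Suc e - c \<and> Suc e - c \<le> uw) \<and>
     (\<forall>c e. run 1 D p False c e \<longrightarrow> lo \<le> Suc e - c \<and> Suc e - c \<le> uo)"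
    unfolding okr_def by (auto simp: all_bool_eq)
  have c1: "cnt 1 D p True = card {d\<in>{1..D}. p d}" unfolding cnt_def by simp
  have c2: "cnt 1 D p False = card {d\<in>{1..D}. \<not> p d}" unfolding cnt_def by simp
  show ?thesis unfolding goodp_def A B C c1 c2 by blast
qed

lemma math:
  assumes D1: "1 \<le> D"
  shows "(\<exists>p. goodp D lw uw lo uo Uw Uo p) \<longleftrightarrow>
    (\<exists>k m W. (m = k - 1 \<or> m = k \<or> m = Suc k) \<and> k * max lw 1 \<le> W \<and> W \<le> k * uw \<and>
       m * max lo 1 \<le> D - W \<and> D - W \<le> m * uo \<and> W \<le> D \<and> W \<le> Uw \<and> D - W \<le> Uo)"
    (is "?L \<longleftrightarrow> ?R")
proof
  define lb where "lb = (\<lambda>v. if v then lw else lo)"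
  define ub where "ub = (\<lambda>v. if v then uw else uo)"
  assume ?L
  then obtain p where g: "goodp D lw uw lo uo Uw Uo p" by blast
  then have ok: "okr 1 D p lb ub" and cU: "cnt 1 D p True \<le> Uw" "cnt 1 D p False \<le> Uo"
    using good_iff unfolding lb_def ub_def by blast+
  define W where "W = cnt 1 D p True"
  have cs: "cnt 1 D p False = D - W" "W \<le> D" using cnt_sum[of 1 D p True] unfolding W_def by simp_all
  show ?R
  proof (cases "p 1")
    case True
    obtain k1 k2 where k: "1 \<le> k1" "k2 = k1 - 1 \<or> k2 = k1"
      "k1 * max (lb True) 1 \<le> cnt 1 D p True" "cnt 1 D p True \<le> k1 * ub True"
      "k2 * max (lb (\<not> True)) 1 \<le> cnt 1 D p (\<not> True)" "cnt 1 D p (\<not> True) \<le> k2 * ub (\<not> True)"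
      using fwd[of 1 D p lb ub True] D1 ok True by blast
    show ?R
      by (rule exI[of _ k1], rule exI[of _ k2], rule exI[of _ W])
        (use k cs cU in \<open>auto simp add: lb_def ub_def W_def\<close>)
  next
    case False
    obtain k1 k2 where k: "1 \<le> k1" "k2 = k1 - 1 \<or> k2 = k1"
      "k1 * max (lb False) 1 \<le> cnt 1 D p False" "cnt 1 D p False \<le> k1 * ub False"
      "k2 * max (lb (\<not> False)) 1 \<le> cnt 1 D p (\<not> False)" "cnt 1 D p (\<not> False) \<le> k2 * ub (\<not> False)"
      using fwd[of 1 D p lb ub False] D1 ok False by blast
    have mk: "k1 = k2 - 1 \<or> k1 = k2 \<or> k1 = Suc k2" using k(1,2) by arith
    show ?R
      by (rule exI[of _ k2], rule exI[of _ k1], rule exI[of _ W])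
        (use k cs cU mk in \<open>auto simp add: lb_def ub_def W_def\<close>)
  qed
next
  define lb where "lb = (\<lambda>v. if v then lw else lo)"
  define ub where "ub = (\<lambda>v. if v then uw else uo)"
  assume ?R
  then obtain k m W where R: "m = k - 1 \<or> m = k \<or> m = Suc k" "k * max lw 1 \<le> W" "W \<le> k * uw"
       "m * max lo 1 \<le> D - W" "D - W \<le> m * uo" "W \<le> D" "W \<le> Uw" "D - W \<le> Uo"
    by blast
  have fin: "okr 1 D p lb ub \<Longrightarrow> cnt 1 D p True = W \<Longrightarrow> goodp D lw uw lo uo Uw Uo p" for p
  proof -
    assume a: "okr 1 D p lb ub" "cnt 1 D p True = W"
    have "cnt 1 D p False = D - W" using cnt_sum[of 1 D p True] a(2) by simp
    then show ?thesis using good_iff[of D lw uw lo uo Uw Uo p] a R(7,8) unfolding lb_def ub_def by simp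
  qed
  show ?L
  proof (cases "m = Suc k")
    case True
    obtain p where p: "p 1 = False" "okr 1 D p lb ub" "cnt 1 D p False = D - W"
      using cons[of m k "m + k" "D - W" W D 1 lb False ub] True R unfolding lb_def ub_def by auto
    have "cnt 1 D p True = W" using cnt_sum[of 1 D p True] p(3) R(6) by simp
    then show ?L using fin p(2) by blast
  next
    case False
    show ?L
    proof (cases "k = 0")
      case True
      then have "m = 0" using False R(1) by simp
      then show ?L using True R D1 by simp
    next
      case k0: False
      obtain p where p: "p 1 = True" "okr 1 D p lb ub" "cnt 1 D p True = W"
        using cons[of k m "k + m" W "D - W" D 1 lb True ub] k0 False R unfolding lb_def ub_def by auto
      then show ?L using fin by blast
    qed
  qed
qed

lemma feas_iff:
  assumes N1: "1 \<le> N" and r: "\<forall>d\<in>{1..D}. rl d = 0 \<and> ru d = N"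
  shows "dodosp_yes D N lw uw lo uo Uw Uo rl ru \<longleftrightarrow> (\<exists>p. goodp D lw uw lo uo Uw Uo p)"
proof
  assume "dodosp_yes D N lw uw lo uo Uw Uo rl ru"
  then obtain f where f: "feasible_schedule D N lw uw lo uo Uw Uo rl ru f"
    unfolding dodosp_yes_def by blast
  have "goodp D lw uw lo uo Uw Uo (f 0)"
  proof -
    have z: "0 < N" using N1 by simp
    show ?thesis using f z unfolding feasible_schedule_def goodp_def work_period_def off_period_def by blast
  qed
  then show "\<exists>p. goodp D lw uw lo uo Uw Uo p" by blast
next
  assume "\<exists>p. goodp D lw uw lo uo Uw Uo p"
  then obtain p where g: "goodp D lw uw lo uo Uw Uo p" by blast
  have cN: "card {i. i < N \<and> p d} \<le> N" for d
  proof -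
    have "{i. i < N \<and> p d} \<subseteq> {..<N}" by auto
    then have "card {i. i < N \<and> p d} \<le> card {..<N}" by (rule card_mono[rotated]) simp
    then show ?thesis by simp
  qed
  have "feasible_schedule D N lw uw lo uo Uw Uo rl ru (\<lambda>i d. p d)"
    unfolding feasible_schedule_def work_period_def off_period_def
    using g r cN unfolding goodp_def by auto
  then show "dodosp_yes D N lw uw lo uo Uw Uo rl ru" unfolding dodosp_yes_def by blast
qed

definition okv :: "nat \<Rightarrow> nat \<Rightarrow> nat \<Rightarrow> nat \<Rightarrow> nat \<Rightarrow> nat \<Rightarrow> nat \<Rightarrow> bool" where
  "okv D A B X Y Uw Uo \<longleftrightarrow> X \<le> D \<and> A \<le> B \<and> A \<le> D - X \<and> A \<le> Uw \<and> A \<le> D \<and>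
     D - Y \<le> B \<and> D - Y \<le> D - X \<and> D - Y \<le> Uw \<and>
     D - Uo \<le> B \<and> D - Uo \<le> D - X \<and> D - Uo \<le> Uw"

lemma okv_iff: "okv D A B X Y Uw Uo \<longleftrightarrow>
  (\<exists>W. A \<le> W \<and> W \<le> B \<and> X \<le> D - W \<and> D - W \<le> Y \<and> W \<le> D \<and> W \<le> Uw \<and> D - W \<le> Uo)"
proof
  assume h: "okv D A B X Y Uw Uo"
  show "\<exists>W. A \<le> W \<and> W \<le> B \<and> X \<le> D - W \<and> D - W \<le> Y \<and> W \<le> D \<and> W \<le> Uw \<and> D - W \<le> Uo"
    by (rule exI[of _ "max A (max (D - Y) (D - Uo))"]) (use h in \<open>simp add: okv_def, arith\<close>)
next
  assume "\<exists>W. A \<le> W \<and> W \<le> B \<and> X \<le> D - W \<and> D - W \<le> Y \<and> W \<le> D \<and> W \<le> Uw \<and> D - W \<le> Uo"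
  then show "okv D A B X Y Uw Uo" unfolding okv_def by auto
qed

definition chk :: "nat \<Rightarrow> nat \<Rightarrow> nat \<Rightarrow> nat \<Rightarrow> nat \<Rightarrow> nat \<Rightarrow> nat \<Rightarrow> nat \<Rightarrow> bool" where
  "chk D lw uw lo uo Uw Uo k \<longleftrightarrow>
     okv D (k * max lw 1) (k * uw) (k * max lo 1 - max lo 1) (k * uo - uo) Uw Uo \<or>
     okv D (k * max lw 1) (k * uw) (k * max lo 1) (k * uo) Uw Uo \<or>
     okv D (k * max lw 1) (k * uw) (k * max lo 1 + max lo 1) (k * uo + uo) Uw Uo"

lemma chk_iff:
  "(\<exists>k\<le>D. chk D lw uw lo uo Uw Uo k) \<longleftrightarrow>
    (\<exists>k m W. (m = k - 1 \<or> m = k \<or> m = Suc k) \<and> k * max lw 1 \<le> W \<and> W \<le> k * uw \<and>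
       m * max lo 1 \<le> D - W \<and> D - W \<le> m * uo \<and> W \<le> D \<and> W \<le> Uw \<and> D - W \<le> Uo)"
proof -
  have e: "(k - 1) * x = k * x - x" "(k - Suc 0) * x = k * x - x" "Suc k * x = k * x + x" for k x :: nat
    by (simp_all add: diff_mult_distrib)
  have kD: "k \<le> D" if "k * max lw 1 \<le> W" "W \<le> D" for k W
  proof -
    have "k \<le> k * max lw 1" by simp
    then show ?thesis using that by linarith
  qed
  show ?thesis
  proof
    assume "\<exists>k\<le>D. chk D lw uw lo uo Uw Uo k"
    then obtain k where "chk D lw uw lo uo Uw Uo k" by blast
    then show "\<exists>k m W. (m = k - 1 \<or> m = k \<or> m = Suc k) \<and> k * max lw 1 \<le> W \<and> W \<le> k * uw \<and>
       m * max lo 1 \<le> D - W \<and> D - W \<le> m * uo \<and> W \<le> D \<and> W \<le> Uw \<and> D - W \<le> Uo"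
      unfolding chk_def okv_iff
    proof (elim disjE exE)
      fix W assume "k * max lw 1 \<le> W \<and> W \<le> k * uw \<and> k * max lo 1 - max lo 1 \<le> D - W \<and>
        D - W \<le> k * uo - uo \<and> W \<le> D \<and> W \<le> Uw \<and> D - W \<le> Uo"
      then show ?thesis by - (rule exI[of _ k], rule exI[of _ "k - 1"], rule exI[of _ W], simp add: e)
    next
      fix W assume "k * max lw 1 \<le> W \<and> W \<le> k * uw \<and> k * max lo 1 \<le> D - W \<and>
        D - W \<le> k * uo \<and> W \<le> D \<and> W \<le> Uw \<and> D - W \<le> Uo"
      then show ?thesis by (intro exI[of _ k] exI[of _ "k"] exI[of _ W]) simp
    next
      fix W assume "k * max lw 1 \<le> W \<and> W \<le> k * uw \<and> k * max lo 1 + max lo 1 \<le> D - W \<and>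
        D - W \<le> k * uo + uo \<and> W \<le> D \<and> W \<le> Uw \<and> D - W \<le> Uo"
      then show ?thesis by - (rule exI[of _ k], rule exI[of _ "Suc k"], rule exI[of _ W], simp add: e)
    qed
  next
    assume "\<exists>k m W. (m = k - 1 \<or> m = k \<or> m = Suc k) \<and> k * max lw 1 \<le> W \<and> W \<le> k * uw \<and>
       m * max lo 1 \<le> D - W \<and> D - W \<le> m * uo \<and> W \<le> D \<and> W \<le> Uw \<and> D - W \<le> Uo"
    then obtain k m W where h: "m = k - 1 \<or> m = k \<or> m = Suc k" "k * max lw 1 \<le> W" "W \<le> k * uw"
       "m * max lo 1 \<le> D - W" "D - W \<le> m * uo" "W \<le> D" "W \<le> Uw" "D - W \<le> Uo" by blast
    have "k \<le> D" using kD h(2,6) .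
    moreover have "chk D lw uw lo uo Uw Uo k"
      unfolding chk_def okv_iff using h by (auto simp: e)
    ultimately show "\<exists>k\<le>D. chk D lw uw lo uo Uw Uo k" by blast
  qed
qed



definition le_b :: "aexp \<Rightarrow> aexp \<Rightarrow> bexp" where
  "le_b x y = Not (Less y x)"

definition cndb :: "aexp \<Rightarrow> aexp \<Rightarrow> bexp" where
  "cndb x y = (let Dm = Mem (Const 0); Am = Mem (Const 9); Bm = Mem (Const 10);
      Uwm = Mem (Const 6); Uom = Mem (Const 7) in
    And (le_b x Dm) (And (le_b Am Bm) (And (le_b Am (Minus Dm x)) (And (le_b Am Uwm)
    (And (le_b Am Dm) (And (le_b (Minus Dm y) Bm) (And (le_b (Minus Dm y) (Minus Dm x))
    (And (le_b (Minus Dm y) Uwm) (And (le_b (Minus Dm Uom) Bm) (And (le_b (Minus Dm Uom) (Minus Dm x))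
    (le_b (Minus Dm Uom) Uwm)))))))))))"

lemma bval_cndb: "bval (cndb x y) s = okv (s 0) (s 9) (s 10) (aval x s) (aval y s) (s 6) (s 7)"
  by (simp add: cndb_def le_b_def okv_def Let_def not_less)

definition setF :: com where "setF = Store (Const 13) (Const 1)"

lemma bs_time: "big_step c s t s' \<Longrightarrow> t = t' \<Longrightarrow> big_step c s t' s'" by simp

lemma if_step: "big_step (If b setF Skip) s 2 (s(13 := if bval b s then 1 else s 13))"
proof (cases "bval b s")
  case True
  have "big_step setF s 1 (s(13 := 1))" unfolding setF_def
    using big_step.Store[of "Const 13" "Const 1" s] by simp
  then show ?thesis using big_step.IfT[OF True] True by (simp add: numeral_2_eq_2)
next
  case False
  have "big_step Skip s 1 s" by (rule big_step.Skip)
  then show ?thesis using big_step.IfF[OF False] False by (simp add: numeral_2_eq_2)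
qed

lemma store_step: "big_step (Store (Const a) e) s 1 (s(a := aval e s))"
  using big_step.Store[of "Const a" e s] by simp

lemma store0: "big_step (Store (Const a) (Const n)) s 1 (s(a := n))"
  using store_step[of a "Const n" s] by simp

definition body :: com where
  "body = Seq (If (cndb (Minus (Mem (Const 12)) (Mem (Const 15))) (Minus (Mem (Const 11)) (Mem (Const 5)))) setF Skip)
    (Seq (If (cndb (Mem (Const 12)) (Mem (Const 11))) setF Skip)
    (Seq (If (cndb (Plus (Mem (Const 12)) (Mem (Const 15))) (Plus (Mem (Const 11)) (Mem (Const 5)))) setF Skip)
    (Seq (Store (Const 9) (Plus (Mem (Const 9)) (Mem (Const 14))))
    (Seq (Store (Const 10) (Plus (Mem (Const 10)) (Mem (Const 3))))
    (Seq (Store (Const 11) (Plus (Mem (Const 11)) (Mem (Const 5))))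
    (Seq (Store (Const 12) (Plus (Mem (Const 12)) (Mem (Const 15))))
    (Store (Const 8) (Plus (Mem (Const 8)) (Const 1)))))))))"

definition invr :: "state \<Rightarrow> state \<Rightarrow> nat \<Rightarrow> bool \<Rightarrow> bool" where
  "invr s0 s k fb \<longleftrightarrow> (\<forall>a<8. s a = s0 a) \<and> s 8 = k \<and> s 9 = k * max (s0 2) 1 \<and> s 10 = k * s0 3 \<and>
     s 11 = k * s0 5 \<and> s 12 = k * max (s0 4) 1 \<and> s 13 = (if fb then 1 else 0) \<and>
     s 14 = max (s0 2) 1 \<and> s 15 = max (s0 4) 1"

definition chk0 :: "state \<Rightarrow> nat \<Rightarrow> bool" where
  "chk0 s0 k = chk (s0 0) (s0 2) (s0 3) (s0 4) (s0 5) (s0 6) (s0 7) k"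

lemma body_step:
  assumes I: "invr s0 s k fb"
  shows "\<exists>s'. big_step body s 11 s' \<and> invr s0 s' (Suc k) (fb \<or> chk0 s0 k)"
proof -
  define c1 where "c1 = cndb (Minus (Mem (Const 12)) (Mem (Const 15))) (Minus (Mem (Const 11)) (Mem (Const 5)))"
  define c2 where "c2 = cndb (Mem (Const 12)) (Mem (Const 11))"
  define c3 where "c3 = cndb (Plus (Mem (Const 12)) (Mem (Const 15))) (Plus (Mem (Const 11)) (Mem (Const 5)))"
  define s1 where "s1 = s(13 := if bval c1 s then 1 else s 13)"
  define s2 where "s2 = s1(13 := if bval c2 s1 then 1 else s1 13)"
  define s3 where "s3 = s2(13 := if bval c3 s2 then 1 else s2 13)"
  define s4 where "s4 = s3(9 := aval (Plus (Mem (Const 9)) (Mem (Const 14))) s3)"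
  define s5 where "s5 = s4(10 := aval (Plus (Mem (Const 10)) (Mem (Const 3))) s4)"
  define s6 where "s6 = s5(11 := aval (Plus (Mem (Const 11)) (Mem (Const 5))) s5)"
  define s7 where "s7 = s6(12 := aval (Plus (Mem (Const 12)) (Mem (Const 15))) s6)"
  define s8 where "s8 = s7(8 := aval (Plus (Mem (Const 8)) (Const 1)) s7)"
  have "big_step body s (2 + (2 + (2 + (1 + (1 + (1 + (1 + 1))))))) s8"
    unfolding body_def c1_def[symmetric] c2_def[symmetric] c3_def[symmetric]
    apply (rule big_step.Seq[OF if_step[of c1 s, folded s1_def]])
    apply (rule big_step.Seq[OF if_step[of c2 s1, folded s2_def]])
    apply (rule big_step.Seq[OF if_step[of c3 s2, folded s3_def]])
    apply (rule big_step.Seq[OF store_step[of 9 "Plus (Mem (Const 9)) (Mem (Const 14))" s3, folded s4_def]])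
    apply (rule big_step.Seq[OF store_step[of 10 "Plus (Mem (Const 10)) (Mem (Const 3))" s4, folded s5_def]])
    apply (rule big_step.Seq[OF store_step[of 11 "Plus (Mem (Const 11)) (Mem (Const 5))" s5, folded s6_def]])
    apply (rule big_step.Seq[OF store_step[of 12 "Plus (Mem (Const 12)) (Mem (Const 15))" s6, folded s7_def]])
    apply (rule store_step[of 8 "Plus (Mem (Const 8)) (Const 1)" s7, folded s8_def])
    done
  then have bs: "big_step body s 11 s8" by (rule bs_time) simp
  have low: "\<forall>a<8. s8 a = s0 a"
    using I unfolding invr_def s8_def s7_def s6_def s5_def s4_def s3_def s2_def s1_def by simp
  have v1: "bval c1 s = okv (s0 0) (k * max (s0 2) 1) (k * s0 3) (k * max (s0 4) 1 - max (s0 4) 1) (k * s0 5 - s0 5) (s0 6) (s0 7)"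
    using I unfolding c1_def bval_cndb invr_def by simp
  have v2: "bval c2 s1 = okv (s0 0) (k * max (s0 2) 1) (k * s0 3) (k * max (s0 4) 1) (k * s0 5) (s0 6) (s0 7)"
    using I unfolding c2_def bval_cndb invr_def s1_def by simp
  have v3: "bval c3 s2 = okv (s0 0) (k * max (s0 2) 1) (k * s0 3) (k * max (s0 4) 1 + max (s0 4) 1) (k * s0 5 + s0 5) (s0 6) (s0 7)"
    using I unfolding c3_def bval_cndb invr_def s1_def s2_def by simp
  have f3: "s8 13 = (if bval c3 s2 then 1 else s2 13)"
    unfolding s8_def s7_def s6_def s5_def s4_def s3_def by simp
  have f2: "s2 13 = (if bval c2 s1 then 1 else s1 13)" unfolding s2_def by simp
  have f1: "s1 13 = (if bval c1 s then 1 else s 13)" unfolding s1_def by simp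
  have f: "s8 13 = (if fb \<or> chk0 s0 k then 1 else 0)"
    unfolding f3 f2 f1 v1 v2 v3 chk0_def chk_def using I unfolding invr_def by auto
  have rest: "s8 8 = Suc k \<and> s8 9 = Suc k * max (s0 2) 1 \<and> s8 10 = Suc k * s0 3 \<and>
     s8 11 = Suc k * s0 5 \<and> s8 12 = Suc k * max (s0 4) 1 \<and>
     s8 14 = max (s0 2) 1 \<and> s8 15 = max (s0 4) 1"
    using I unfolding invr_def s8_def s7_def s6_def s5_def s4_def s3_def s2_def s1_def by simp
  have "invr s0 s8 (Suc k) (fb \<or> chk0 s0 k)" unfolding invr_def using low f rest by simp
  then show ?thesis using bs by blast
qed

definition loopc :: com where
  "loopc = While (Less (Mem (Const 8)) (Plus (Mem (Const 0)) (Const 1))) body"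

lemma ex_split: "k \<le> D \<Longrightarrow> (\<exists>k'. k \<le> k' \<and> k' \<le> D \<and> P k') \<longleftrightarrow> P k \<or> (\<exists>k'. Suc k \<le> k' \<and> k' \<le> D \<and> P k')"
proof
  assume "\<exists>k'. k \<le> k' \<and> k' \<le> D \<and> P k'"
  then obtain k' where h: "k \<le> k'" "k' \<le> D" "P k'" by blast
  show "P k \<or> (\<exists>k'. Suc k \<le> k' \<and> k' \<le> D \<and> P k')"
  proof (cases "k' = k")
    case True then show ?thesis using h by simp
  next
    case False then show ?thesis using h by (intro disjI2 exI[of _ k']) simp
  qed
next
  assume "k \<le> D" "P k \<or> (\<exists>k'. Suc k \<le> k' \<and> k' \<le> D \<and> P k')"
  then show "\<exists>k'. k \<le> k' \<and> k' \<le> D \<and> P k'" by (auto intro: Suc_leD)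
qed

lemma loop_step:
  "\<forall>s k fb. invr s0 s k fb \<longrightarrow> k + j = Suc (s0 0) \<longrightarrow>
     (\<exists>s'. big_step loopc s (12 * j + 1) s' \<and>
        s' 13 = (if fb \<or> (\<exists>k'. k \<le> k' \<and> k' \<le> s0 0 \<and> chk0 s0 k') then 1 else 0))"
proof (induction j)
  case 0
  show ?case
  proof (intro allI impI)
    fix s k fb assume I: "invr s0 s k fb" and kj: "k + 0 = Suc (s0 0)"
    have nb: "\<not> bval (Less (Mem (Const 8)) (Plus (Mem (Const 0)) (Const 1))) s"
      using I kj unfolding invr_def by simp
    have "big_step loopc s 1 s" unfolding loopc_def by (rule big_step.WhileF[OF nb])
    moreover have "s 13 = (if fb \<or> (\<exists>k'. k \<le> k' \<and> k' \<le> s0 0 \<and> chk0 s0 k') then 1 else 0)"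
      using I kj unfolding invr_def by auto
    ultimately show "\<exists>s'. big_step loopc s (12 * 0 + 1) s' \<and>
        s' 13 = (if fb \<or> (\<exists>k'. k \<le> k' \<and> k' \<le> s0 0 \<and> chk0 s0 k') then 1 else 0)"
      by - (rule exI[of _ s], simp only: mult_0_right add_0)
  qed
next
  case (Suc j)
  show ?case
  proof (intro allI impI)
    fix s k fb assume I: "invr s0 s k fb" and kj: "k + Suc j = Suc (s0 0)"
    have kD: "k \<le> s0 0" using kj by simp
    have b: "bval (Less (Mem (Const 8)) (Plus (Mem (Const 0)) (Const 1))) s"
      using I kj unfolding invr_def by simp
    obtain s2 where s2: "big_step body s 11 s2" "invr s0 s2 (Suc k) (fb \<or> chk0 s0 k)"
      using body_step[OF I] by blast
    obtain s' where s': "big_step loopc s2 (12 * j + 1) s'"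
      "s' 13 = (if (fb \<or> chk0 s0 k) \<or> (\<exists>k'. Suc k \<le> k' \<and> k' \<le> s0 0 \<and> chk0 s0 k') then 1 else 0)"
    proof -
      have kj2: "Suc k + j = Suc (s0 0)" using kj by simp
      show ?thesis using Suc.IH[rule_format, OF s2(2) kj2] that by blast
    qed
    have "big_step loopc s (Suc (11 + (12 * j + 1))) s'"
      unfolding loopc_def by (rule big_step.WhileT[OF b s2(1) s'(1)[unfolded loopc_def]])
    then have "big_step loopc s (12 * Suc j + 1) s'" by (rule bs_time) simp
    moreover have "s' 13 = (if fb \<or> (\<exists>k'. k \<le> k' \<and> k' \<le> s0 0 \<and> chk0 s0 k') then 1 else 0)"
      using s'(2) ex_split[OF kD, of "chk0 s0"] by auto
    ultimately show "\<exists>s'. big_step loopc s (12 * Suc j + 1) s' \<and>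
        s' 13 = (if fb \<or> (\<exists>k'. k \<le> k' \<and> k' \<le> s0 0 \<and> chk0 s0 k') then 1 else 0)" by blast
  qed
qed

definition maxc :: "nat \<Rightarrow> nat \<Rightarrow> com" where
  "maxc a c = If (Less (Mem (Const a)) (Const 1)) (Store (Const c) (Const 1)) (Store (Const c) (Mem (Const a)))"

lemma maxc_step: "big_step (maxc a c) s 2 (s(c := max (s a) 1))"
proof (cases "s a < 1")
  case True
  have b: "bval (Less (Mem (Const a)) (Const 1)) s" using True by simp
  have "big_step (Store (Const c) (Const 1)) s 1 (s(c := 1))" using store_step[of c "Const 1" s] by simp
  then have "big_step (maxc a c) s (Suc 1) (s(c := 1))" unfolding maxc_def by (rule big_step.IfT[OF b])
  then show ?thesis using True by (simp add: numeral_2_eq_2)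
next
  case False
  have b: "\<not> bval (Less (Mem (Const a)) (Const 1)) s" using False by simp
  have "big_step (Store (Const c) (Mem (Const a))) s 1 (s(c := s a))" using store_step[of c "Mem (Const a)" s] by simp
  then have "big_step (maxc a c) s (Suc 1) (s(c := s a))" unfolding maxc_def by (rule big_step.IfF[OF b])
  moreover have "max (s a) 1 = s a" using False by simp
  ultimately show ?thesis by (simp add: numeral_2_eq_2)
qed

definition initc :: com where
  "initc = Seq (Store (Const 8) (Const 0)) (Seq (Store (Const 9) (Const 0)) (Seq (Store (Const 10) (Const 0))
     (Seq (Store (Const 11) (Const 0)) (Seq (Store (Const 12) (Const 0)) (Seq (Store (Const 13) (Const 0))
     (Seq (maxc 2 14) (maxc 4 15)))))))"

lemma init_step: "\<exists>s1. big_step initc s0 10 s1 \<and> invr s0 s1 0 False"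
proof -
  define t1 where "t1 = s0(8 := 0)"
  define t2 where "t2 = t1(9 := 0)"
  define t3 where "t3 = t2(10 := 0)"
  define t4 where "t4 = t3(11 := 0)"
  define t5 where "t5 = t4(12 := 0)"
  define t6 where "t6 = t5(13 := 0)"
  define t7 where "t7 = t6(14 := max (t6 2) 1)"
  define t8 where "t8 = t7(15 := max (t7 4) 1)"
  have "big_step initc s0 (1 + (1 + (1 + (1 + (1 + (1 + (2 + 2))))))) t8"
    unfolding initc_def
    apply (rule big_step.Seq[OF store0[of 8 0 s0, folded t1_def]])
    apply (rule big_step.Seq[OF store0[of 9 0 t1, folded t2_def]])
    apply (rule big_step.Seq[OF store0[of 10 0 t2, folded t3_def]])
    apply (rule big_step.Seq[OF store0[of 11 0 t3, folded t4_def]])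
    apply (rule big_step.Seq[OF store0[of 12 0 t4, folded t5_def]])
    apply (rule big_step.Seq[OF store0[of 13 0 t5, folded t6_def]])
    apply (rule big_step.Seq[OF maxc_step[of 2 14 t6, folded t7_def]])
    apply (rule maxc_step[of 4 15 t7, folded t8_def])
    done
  then have "big_step initc s0 10 t8" by (rule bs_time) simp
  moreover have "invr s0 t8 0 False"
    unfolding invr_def t8_def t7_def t6_def t5_def t4_def t3_def t2_def t1_def by simp
  ultimately show ?thesis by blast
qed

definition prog :: com where
  "prog = Seq initc (Seq loopc (Store (Const 0) (Mem (Const 13))))"

lemma prog_run: "\<exists>s'. big_step prog s0 (12 * s0 0 + 24) s' \<and>
   s' 0 = (if \<exists>k\<le>s0 0. chk0 s0 k then 1 else 0)"
proof -
  obtain s1 where s1: "big_step initc s0 10 s1" "invr s0 s1 0 False" using init_step by blast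
  obtain s2 where s2: "big_step loopc s1 (12 * Suc (s0 0) + 1) s2"
     "s2 13 = (if False \<or> (\<exists>k'. 0 \<le> k' \<and> k' \<le> s0 0 \<and> chk0 s0 k') then 1 else 0)"
  proof -
    have kj: "0 + Suc (s0 0) = Suc (s0 0)" by simp
    show ?thesis using loop_step[of s0 "Suc (s0 0)", rule_format, OF s1(2) kj] that by blast
  qed
  have "big_step prog s0 (10 + ((12 * Suc (s0 0) + 1) + 1)) (s2(0 := aval (Mem (Const 13)) s2))"
    unfolding prog_def
    by (rule big_step.Seq[OF s1(1) big_step.Seq[OF s2(1) store_step[of 0 "Mem (Const 13)" s2]]])
  then have "big_step prog s0 (10 + ((12 * Suc (s0 0) + 1) + 1)) (s2(0 := s2 13))" by simp
  then have "big_step prog s0 (12 * s0 0 + 24) (s2(0 := s2 13))" by (rule bs_time) simp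
  moreover have "(s2(0 := s2 13)) 0 = (if \<exists>k\<le>s0 0. chk0 s0 k then 1 else 0)" using s2(2) by simp
  ultimately show ?thesis by blast
qed

theorem lemma3p1:
  shows "\<exists>(P::com) (c::nat) (k::nat).
    \<forall>D N lw uw lo uo Uw Uo (rl::nat \<Rightarrow> nat) (ru::nat \<Rightarrow> nat).
      D \<ge> 1 \<longrightarrow> N \<ge> 1 \<longrightarrow> (\<forall>d\<in>{1..D}. rl d = 0 \<and> ru d = N) \<longrightarrow>
      (\<exists>t s'. big_step P (input_state D N lw uw lo uo Uw Uo rl ru) t s' \<and>
              t \<le> c * D ^ k \<and>
              (s' 0 = 1 \<longleftrightarrow> dodosp_yes D N lw uw lo uo Uw Uo rl ru))"
proof (rule exI[of _ prog], rule exI[of _ 36], rule exI[of _ 1], intro allI impI)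
  fix D N lw uw lo uo Uw Uo and rl ru :: "nat \<Rightarrow> nat"
  assume D1: "D \<ge> 1" and N1: "N \<ge> 1" and r: "\<forall>d\<in>{1..D}. rl d = 0 \<and> ru d = N"
  define s0 where "s0 = input_state D N lw uw lo uo Uw Uo rl ru"
  have sv: "s0 0 = D" "s0 2 = lw" "s0 3 = uw" "s0 4 = lo" "s0 5 = uo" "s0 6 = Uw" "s0 7 = Uo"
    unfolding s0_def input_state_def by simp_all
  obtain s' where s': "big_step prog s0 (12 * s0 0 + 24) s'"
     "s' 0 = (if \<exists>k\<le>s0 0. chk0 s0 k then 1 else 0)" using prog_run by blast
  have eq: "(\<exists>k\<le>s0 0. chk0 s0 k) \<longleftrightarrow> dodosp_yes D N lw uw lo uo Uw Uo rl ru"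
    unfolding chk0_def sv chk_iff feas_iff[OF N1 r] math[OF D1] ..
  have t: "12 * s0 0 + 24 \<le> 36 * D ^ 1" using sv D1 by simp
  show "\<exists>t s'. big_step prog (input_state D N lw uw lo uo Uw Uo rl ru) t s' \<and>
              t \<le> 36 * D ^ 1 \<and>
              (s' 0 = 1 \<longleftrightarrow> dodosp_yes D N lw uw lo uo Uw Uo rl ru)"
  proof -
    have r1: "s' 0 = 1 \<longleftrightarrow> dodosp_yes D N lw uw lo uo Uw Uo rl ru" using s'(2) eq by simp
    show ?thesis using s'(1) t r1 unfolding s0_def by blast
  qed
qed

end
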